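(* Let $(a_n)$, $(b_n)$ be positive sequences and set $p_n=a_n n^{-1}\log n$ and $q_n=b_n n^{-1}\log n$. Suppose there is a constant $C$ such that $C^{-1}\le a_n,b_n\le C$ for all but finitely many $n$. Then $P(n,p_n,q_n)=o(n^{-1})$ if and only if \[ (a_n+b_n-2\sqrt{a_nb_n}-1)\log n+\tfrac12\log\log n\to\infty . \]
   Context: For integers $m,n\ge0$ and $p,q\in[0,1]$, $P(m,n,p,q)=\Pr(Y\ge X)$ where $X\sim\mathrm{Binom}(m,\max\{p,q\})$ and $Y\sim\mathrm{Binom}(n,\min\{p,q\})$ are independent; $P(n,p,q)=P(n,n,p,q)$. *)

theory Defs
  imports "HOL-Analysis.Analysis" "HOL-Library.Landau_Symbols"
begin

definition binom_pmf :: "nat \<Rightarrow> real \<Rightarrow> nat \<Rightarrow> real" where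
  "binom_pmf n p k = real (n choose k) * p ^ k * (1 - p) ^ (n - k)"

text \<open>P(m,n,p,q) = Pr(Y \<ge> X), X ~ Binom(m, max p q), Y ~ Binom(n, min p q) independent.\<close>
definition Pmnpq :: "nat \<Rightarrow> nat \<Rightarrow> real \<Rightarrow> real \<Rightarrow> real" where
  "Pmnpq m n p q =
     (\<Sum>x\<le>m. \<Sum>y\<le>n. if x \<le> y then binom_pmf m (max p q) x * binom_pmf n (min p q) y else 0)"

definition Pnpq :: "nat \<Rightarrow> real \<Rightarrow> real \<Rightarrow> real" where
  "Pnpq n p q = Pmnpq n n p q"

end

theory Submission
  imports Defs "HOL-Real_Asymp.Real_Asymp"
begin


lemma pmf_tilt:
  fixes p r t s :: real
  assumes "x \<le> n" and "p = r * t * s" and "1 - p = (1 - r) * s"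
  shows "binom_pmf n p x = binom_pmf n r x * t ^ x * s ^ n"
proof -
  have "s ^ n = s ^ x * s ^ (n - x)" using assms(1) by (simp add: power_add[symmetric])
  moreover have "p ^ x = r^x * t^x * s^x" using assms(2) by (simp add: power_mult_distrib)
  moreover have "(1-p) ^ (n-x) = (1-r)^(n-x) * s^(n-x)" using assms(3) by (simp add: power_mult_distrib)
  ultimately show ?thesis unfolding binom_pmf_def by (simp add: algebra_simps)
qed

lemma sqm: fixes a1 b1 c1 d1 :: real
  assumes "a1*b1 = c1^2 * d1" "c1 \<ge> 0" shows "sqrt a1 * sqrt b1 = c1 * sqrt d1"
proof -
  have "sqrt a1 * sqrt b1 = sqrt (c1^2*d1)" by (simp add: real_sqrt_mult[symmetric] assms(1))
  also have "\<dots> = c1 * sqrt d1" using assms(2) by (simp add: real_sqrt_mult)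
  finally show ?thesis .
qed

definition Bh :: "real \<Rightarrow> real \<Rightarrow> real" where
  "Bh p q = sqrt (p*q) + sqrt ((1-p)*(1-q))"
definition rr :: "real \<Rightarrow> real \<Rightarrow> real" where
  "rr p q = sqrt (p*q) / Bh p q"
definition tt :: "real \<Rightarrow> real \<Rightarrow> real" where
  "tt p q = sqrt (p*(1-q)) / sqrt (q*(1-p))"

lemma tilt_prod:
  assumes p: "0 < p" "p < 1" and q: "0 < q" "q < 1" and "x \<le> n" "y \<le> n"
  shows "binom_pmf n p x * binom_pmf n q y =
     Bh p q ^ (2*n) * (tt p q ^ x / tt p q ^ y) * binom_pmf n (rr p q) x * binom_pmf n (rr p q) y"
proof -
  define B where "B = Bh p q"
  define d where "d = sqrt ((1-p)*(1-q))"
  define g where "g = sqrt (p*q)"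
  define s1 where "s1 = B*(1-p)/d"
  define s2 where "s2 = B*(1-q)/d"
  define r where "r = rr p q"
  define t where "t = tt p q"
  have dpos: "d > 0" using p q by (simp add: d_def)
  have gpos: "g > 0" using p q by (simp add: g_def)
  have Bdef: "B = g + d" by (simp add: B_def Bh_def g_def d_def)
  have Bpos: "B > 0" using dpos gpos Bdef by simp
  have r: "r = g / B" by (simp add: r_def rr_def B_def g_def)
  have tpos: "t > 0" using p q by (simp add: t_def tt_def)
  have sq1: "sqrt (p*(1-q)) * g = p * sqrt (q*(1-q))"
    unfolding g_def using p by (intro sqm) (auto simp: power2_eq_square algebra_simps)
  have sq2: "sqrt (q*(1-p)) * d = (1-p) * sqrt (q*(1-q))"
    unfolding d_def using p by (intro sqm) (auto simp: power2_eq_square algebra_simps)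
  have sq3: "sqrt (q*(1-p)) * g = q * sqrt (p*(1-p))"
    unfolding g_def using q by (intro sqm) (auto simp: power2_eq_square algebra_simps)
  have sq4: "sqrt (p*(1-q)) * d = (1-q) * sqrt (p*(1-p))"
    unfolding d_def using q by (intro sqm) (auto simp: power2_eq_square algebra_simps)
  have pos1: "sqrt (q*(1-q)) > 0" "sqrt (p*(1-p)) > 0" "sqrt (q*(1-p)) > 0" "sqrt (p*(1-q)) > 0"
    using p q by auto
  have e1: "p = r * t * s1"
  proof -
    have "r * t * s1 = (sqrt (p*(1-q)) * g) * (1-p) / (sqrt (q*(1-p)) * d)"
      using Bpos by (simp add: r s1_def t_def tt_def)
    also have "\<dots> = (p * sqrt (q*(1-q))) * (1-p) / ((1-p) * sqrt (q*(1-q)))"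
      by (simp only: sq1 sq2)
    also have "\<dots> = p" using pos1 p q by simp
    finally show ?thesis by simp
  qed
  have omr: "1 - r = d / B" using Bpos by (simp add: r Bdef field_simps)
  have e2: "1 - p = (1 - r) * s1"
    using Bpos dpos by (simp add: omr s1_def)
  have e3: "q = r * (1/t) * s2"
  proof -
    have "r * (1/t) * s2 = (sqrt (q*(1-p)) * g) * (1-q) / (sqrt (p*(1-q)) * d)"
      using Bpos by (simp add: r s2_def t_def tt_def)
    also have "\<dots> = (q * sqrt (p*(1-p))) * (1-q) / ((1-q) * sqrt (p*(1-p)))"
      by (simp only: sq3 sq4)
    also have "\<dots> = q" using pos1 p q by simp
    finally show ?thesis by simp
  qed
  have e4: "1 - q = (1 - r) * s2"
    using Bpos dpos by (simp add: omr s2_def)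
  have s12: "s1 * s2 = B^2"
  proof -
    have dd: "d*d = (1-p)*(1-q)" using p q by (simp add: d_def)
    have "s1 * s2 = B^2 * ((1-p)*(1-q)) / (d*d)" by (simp add: s1_def s2_def power2_eq_square)
    then show ?thesis using dpos by (simp add: dd[symmetric])
  qed
  have "binom_pmf n p x * binom_pmf n q y
      = binom_pmf n r x * t ^ x * s1 ^ n * (binom_pmf n r y * (1/t) ^ y * s2 ^ n)"
    using pmf_tilt[OF assms(5) e1 e2] pmf_tilt[OF assms(6) e3 e4] by simp
  also have "\<dots> = (s1 * s2)^n * (t^x / t^y) * binom_pmf n r x * binom_pmf n r y"
    by (simp add: power_mult_distrib power_divide field_simps)
  also have "\<dots> = B^(2*n) * (t^x / t^y) * binom_pmf n r x * binom_pmf n r y"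
    by (simp add: s12 power_mult)
  finally show ?thesis by (simp add: B_def r_def t_def)
qed


lemma geo_inj:
  fixes u :: real
  assumes u: "0 \<le> u" "u < 1" and fin: "finite S" and inj: "inj_on f S"
  shows "(\<Sum>s\<in>S. u ^ f s) \<le> 1 / (1 - u)"
proof -
  obtain N where N: "f ` S \<subseteq> {..<N}" using finite_nat_bounded[OF finite_imageI[OF fin]] by blast
  have "(\<Sum>s\<in>S. u ^ f s) = (\<Sum>d\<in>f ` S. u ^ d)" by (simp add: sum.reindex[OF inj] o_def)
  also have "\<dots> \<le> (\<Sum>d<N. u ^ d)" using N u by (intro sum_mono2) auto
  also have "\<dots> = (1 - u^N) / (1 - u)" using u by (simp add: sum_gp_strict)
  also have "\<dots> \<le> 1 / (1 - u)" using u by (intro divide_right_mono) auto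
  finally show ?thesis .
qed

lemma geo1:
  fixes u :: real
  assumes u: "0 \<le> u" "u < 1"
  shows "(\<Sum>y\<le>n. if x \<le> y then u ^ (y - x) else 0) \<le> 1 / (1 - u)"
proof -
  have "(\<Sum>y\<le>n. if x \<le> y then u ^ (y - x) else 0) = (\<Sum>y\<in>{y\<in>{..n}. x \<le> y}. u ^ (y - x))"
    by (subst sum.inter_filter) auto
  also have "\<dots> \<le> 1 / (1 - u)" using u by (intro geo_inj) (auto simp: inj_on_def)
  finally show ?thesis .
qed

lemma geo2:
  fixes u :: real
  assumes u: "0 \<le> u" "u < 1"
  shows "(\<Sum>x\<le>n. if x \<le> y then u ^ (y - x) else 0) \<le> 1 / (1 - u)"
proof -
  have "(\<Sum>x\<le>n. if x \<le> y then u ^ (y - x) else 0) = (\<Sum>x\<in>{x\<in>{..n}. x \<le> y}. u ^ (y - x))"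
    by (subst sum.inter_filter) auto
  also have "\<dots> \<le> 1 / (1 - u)" using u by (intro geo_inj) (auto simp: inj_on_def)
  finally show ?thesis .
qed

lemma tilted_sum_upper:
  fixes t :: real and R :: "nat \<Rightarrow> real"
  assumes t: "t > 1" and R: "\<And>k. R k \<ge> 0"
  shows "(\<Sum>x\<le>n. \<Sum>y\<le>n. if x \<le> y then (t^x / t^y) * R x * R y else 0)
          \<le> t / (t - 1) * (\<Sum>k\<le>n. (R k)^2)"
proof -
  define u where "u = 1 / t"
  have u: "0 \<le> u" "u < 1" using t by (auto simp: u_def)
  have G: "1 / (1 - u) = t / (t - 1)" using t by (simp add: u_def field_simps)
  have tu: "t^x / t^y = u ^ (y - x)" if "x \<le> y" for x y
  proof -
    have "t^y = t^x * t^(y-x)" using that by (simp add: power_add[symmetric])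
    then show ?thesis using t by (simp add: u_def power_one_over)
  qed
  have "(\<Sum>x\<le>n. \<Sum>y\<le>n. if x \<le> y then (t^x / t^y) * R x * R y else 0)
      \<le> (\<Sum>x\<le>n. \<Sum>y\<le>n. (if x \<le> y then u ^ (y - x) else 0) * ((R x)^2/2)
                        + (if x \<le> y then u ^ (y - x) else 0) * ((R y)^2/2))"
  proof (intro sum_mono)
    fix x y
    have amgm: "R x * R y \<le> (R x)^2/2 + (R y)^2/2"
    proof -
      have "0 \<le> (R x - R y)^2" by simp
      then show ?thesis by (simp add: power2_diff)
    qed
    have u0: "u ^ (y - x) \<ge> 0" using u by simp
    show "(if x \<le> y then (t^x / t^y) * R x * R y else 0)
        \<le> (if x \<le> y then u ^ (y - x) else 0) * ((R x)^2/2)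
          + (if x \<le> y then u ^ (y - x) else 0) * ((R y)^2/2)"
    proof (cases "x \<le> y")
      case True
      have "u ^ (y - x) * (R x * R y) \<le> u ^ (y - x) * ((R x)^2/2 + (R y)^2/2)"
        using amgm u0 by (intro mult_left_mono) auto
      then show ?thesis using True tu[OF True] by (simp add: algebra_simps)
    qed simp
  qed
  also have "\<dots> = (\<Sum>x\<le>n. (R x)^2/2 * (\<Sum>y\<le>n. if x \<le> y then u ^ (y - x) else 0))
                + (\<Sum>y\<le>n. (R y)^2/2 * (\<Sum>x\<le>n. if x \<le> y then u ^ (y - x) else 0))"
  proof -
    let ?a = "\<lambda>x y. (if x \<le> y then u ^ (y - x) else 0)"
    have 1: "(\<Sum>x\<le>n. \<Sum>y\<le>n. ?a x y * ((R x)^2/2) + ?a x y * ((R y)^2/2))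
       = (\<Sum>x\<le>n. \<Sum>y\<le>n. ?a x y * ((R x)^2/2)) + (\<Sum>x\<le>n. \<Sum>y\<le>n. ?a x y * ((R y)^2/2))"
      by (simp only: sum.distrib)
    have 2: "(\<Sum>x\<le>n. \<Sum>y\<le>n. ?a x y * ((R x)^2/2)) = (\<Sum>x\<le>n. (R x)^2/2 * (\<Sum>y\<le>n. ?a x y))"
      by (simp only: sum_distrib_left mult.commute)
    have 3: "(\<Sum>x\<le>n. \<Sum>y\<le>n. ?a x y * ((R y)^2/2)) = (\<Sum>y\<le>n. \<Sum>x\<le>n. ?a x y * ((R y)^2/2))"
      by (rule sum.swap)
    have 4: "(\<Sum>y\<le>n. \<Sum>x\<le>n. ?a x y * ((R y)^2/2)) = (\<Sum>y\<le>n. (R y)^2/2 * (\<Sum>x\<le>n. ?a x y))"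
      by (simp only: sum_distrib_left mult.commute)
    show ?thesis using 1 2 3 4 by simp
  qed
  also have "\<dots> \<le> (\<Sum>x\<le>n. (R x)^2/2 * (1/(1-u))) + (\<Sum>y\<le>n. (R y)^2/2 * (1/(1-u)))"
    by (intro add_mono sum_mono mult_left_mono geo1 geo2 u) auto
  also have "\<dots> = t / (t - 1) * (\<Sum>k\<le>n. (R k)^2)"
  proof -
    have "(\<Sum>x\<le>n. (R x)^2/2 * (1/(1-u))) = (t/(t-1))/2 * (\<Sum>k\<le>n. (R k)^2)"
      unfolding G by (simp add: sum_distrib_left sum_divide_distrib algebra_simps)
    moreover have "t - 1 > 0" using t by simp
    ultimately show ?thesis by (simp add: field_simps)
  qed
  finally show ?thesis .
qed

lemma tilted_sum_lower:
  fixes t :: real and R :: "nat \<Rightarrow> real"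
  assumes t: "t > 0" and R: "\<And>k. R k \<ge> 0"
  shows "(\<Sum>k\<le>n. (R k)^2) \<le> (\<Sum>x\<le>n. \<Sum>y\<le>n. if x \<le> y then (t^x / t^y) * R x * R y else 0)"
proof (intro sum_mono)
  fix x assume x: "x \<in> {..n}"
  have "(R x)^2 = (if x \<le> x then (t^x / t^x) * R x * R x else 0)"
    using t by (simp add: power2_eq_square)
  also have "\<dots> \<le> (\<Sum>y\<le>n. if x \<le> y then (t^x / t^y) * R x * R y else 0)"
    using x t R by (intro member_le_sum) auto
  finally show "(R x)^2 \<le> \<dots>" .
qed


lemma fact_low: "i \<le> k \<Longrightarrow> fact (k - i) * (k + 1 - i) ^ i \<le> (fact k :: nat)"
proof (induction i)
  case 0 then show ?case by simp
next
  case (Suc i)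
  have "fact (k - Suc i) * (k + 1 - Suc i) ^ Suc i = (fact (k - Suc i) * (k - i)) * (k - i) ^ i"
    by (simp add: algebra_simps)
  also have "fact (k - Suc i) * (k - i) = fact (k - i)"
  proof -
    have "k - i = Suc (k - Suc i)" using Suc.prems by simp
    then show ?thesis by (simp add: algebra_simps)
  qed
  also have "fact (k - i) * (k - i) ^ i \<le> fact (k - i) * (k + 1 - i) ^ i"
    by (intro mult_left_mono power_mono) auto
  also have "\<dots> \<le> fact k" using Suc by simp
  finally show ?case .
qed

lemma fact_up: "fact (k + i) \<le> fact k * (k + i) ^ i"
proof (induction i)
  case 0 then show ?case by simp
next
  case (Suc i)
  have "fact (k + Suc i) = (k + Suc i) * fact (k + i)" by simp
  also have "\<dots> \<le> (k + Suc i) * (fact k * (k + i) ^ i)" by (rule mult_left_mono) (use Suc in auto)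
  also have "\<dots> \<le> (k + Suc i) * (fact k * (k + Suc i) ^ i)"
    by (intro mult_left_mono power_mono) auto
  also have "\<dots> = fact k * (k + Suc i) ^ Suc i" by (simp add: algebra_simps)
  finally show ?case .
qed

lemma exp_partial: fixes x :: real assumes "x \<ge> 0" "finite A"
  shows "(\<Sum>j\<in>A. x ^ j / fact j) \<le> exp x"
proof -
  have "(\<Sum>j\<in>A. x ^ j / fact j) = (\<Sum>j\<in>A. inverse (fact j) * x ^ j)" by (simp add: field_simps)
  also have "\<dots> \<le> (\<Sum>j. inverse (fact j) * x ^ j)"
    by (rule sum_le_suminf[OF summable_exp assms(2)]) (use assms in auto)
  also have "\<dots> = exp x"
  proof -
    have "(\<lambda>j. inverse (fact j) * x ^ j) sums exp x" using exp_converges[of x] by (simp add: scaleR_conv_of_real)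
    then show ?thesis by (simp add: sums_iff)
  qed
  finally show ?thesis .
qed

lemma natfloor: fixes x :: real assumes "x \<ge> 0"
  shows "real (nat \<lfloor>x\<rfloor>) \<le> x" "x \<le> real (nat \<lfloor>x\<rfloor>) + 1"
proof -
  have "0 \<le> \<lfloor>x\<rfloor>" using assms by simp
  hence eq: "real (nat \<lfloor>x\<rfloor>) = of_int \<lfloor>x\<rfloor>" by simp
  show "real (nat \<lfloor>x\<rfloor>) \<le> x" "x \<le> real (nat \<lfloor>x\<rfloor>) + 1"
    using floor_correct[of x] eq by linarith+
qed

lemma bern: fixes x :: real assumes "0 \<le> x" "x \<le> 1" shows "1 - real i * x \<le> (1 - x) ^ i"
  using Bernoulli_inequality[of "-x" i] assms by simp

lemma mode_aux:
  fixes P :: "nat \<Rightarrow> real" and lam :: real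
  assumes sum1: "\<And>A. finite A \<Longrightarrow> (\<Sum>j\<in>A. P j) \<le> 1"
    and h: "inj_on h {..I}" and cmp: "\<And>i. i \<le> I \<Longrightarrow> P k \<le> 4/3 * P (h i)"
    and I: "sqrt lam / 2 \<le> real I + 1" and lam: "lam > 0" and Pk: "P k \<ge> 0"
  shows "P k \<le> 3 / sqrt lam"
proof -
  have "(real I + 1) * (3/4 * P k) = (\<Sum>i\<le>I. 3/4 * P k)" by simp
  also have "\<dots> \<le> (\<Sum>i\<le>I. P (h i))" using cmp by (intro sum_mono) fastforce
  also have "\<dots> = (\<Sum>j\<in>h ` {..I}. P j)" by (simp add: sum.reindex[OF h])
  also have "\<dots> \<le> 1" by (rule sum1) simp
  finally have 1: "(real I + 1) * (3/4 * P k) \<le> 1" .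
  have "sqrt lam / 2 * (3/4 * P k) \<le> (real I + 1) * (3/4 * P k)"
    using I Pk by (intro mult_right_mono) auto
  with 1 have 2: "sqrt lam / 2 * (3/4 * P k) \<le> 1" by linarith
  have "sqrt lam * P k = 8/3 * (sqrt lam / 2 * (3/4 * P k))" by simp
  with 2 have "sqrt lam * P k \<le> 8/3" by linarith
  then show ?thesis using lam by (simp add: field_simps)
qed

lemma pois_mode:
  fixes lam :: real assumes lam: "lam \<ge> 1"
  shows "lam ^ k / fact k * exp (- lam) \<le> 3 / sqrt lam"
proof -
  define P where "P j = lam ^ j / fact j * exp (- lam)" for j
  have sum1: "(\<Sum>j\<in>A. P j) \<le> 1" if "finite A" for A
  proof -
    have "(\<Sum>j\<in>A. P j) = (\<Sum>j\<in>A. lam ^ j / fact j) * exp (- lam)"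
      by (simp add: P_def sum_distrib_right)
    also have "\<dots> \<le> exp lam * exp (- lam)"
      using exp_partial[of lam A] that lam by (intro mult_right_mono) auto
    also have "\<dots> = 1" by (simp add: exp_minus)
    finally show ?thesis .
  qed
  have Pk: "P k \<ge> 0" using lam by (simp add: P_def)
  show ?thesis
  proof (cases "lam \<le> real k + 1")
    case True
    define I where "I = nat \<lfloor>sqrt (real k + 1) / 2\<rfloor>"
    have I1: "real I \<le> sqrt (real k + 1) / 2" unfolding I_def by (rule natfloor) simp
    have I2: "sqrt (real k + 1) / 2 \<le> real I + 1" unfolding I_def by (rule natfloor) simp
    have sq: "sqrt (real k + 1) \<le> real k + 1"
    proof -
      have s1: "sqrt (real k + 1) \<ge> 1" by (rule real_sqrt_ge_one) simp
      have "sqrt (real k + 1) * 1 \<le> sqrt (real k + 1) * sqrt (real k + 1)"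
        using mult_left_mono[OF s1, of "sqrt (real k + 1)"] by simp
      then show ?thesis by simp
    qed
    have Ik: "I \<le> k" using I1 sq by (simp add: field_simps)
    have I4: "real I ^ 2 \<le> (real k + 1) / 4"
    proof -
      have "real I ^ 2 \<le> (sqrt (real k + 1) / 2) ^ 2" using I1 by (intro power_mono) auto
      then show ?thesis by (simp add: power_divide)
    qed
    have lamsq: "sqrt lam \<le> sqrt (real k + 1)" using True by simp
    show ?thesis unfolding P_def[symmetric]
    proof (rule mode_aux[OF sum1 _ _ _ _ Pk, of "\<lambda>i. k - i" I])
      show "inj_on (\<lambda>i. k - i) {..I}" using Ik by (auto simp: inj_on_def)
      show "sqrt lam / 2 \<le> real I + 1" using I2 lamsq by linarith
      show "lam > 0" using lam by simp
      fix i assume i: "i \<le> I"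
      hence ik: "i \<le> k" using Ik by simp
      have i2: "real i ^ 2 \<le> (real k + 1) / 4"
      proof -
        have "real i ^ 2 \<le> real I ^ 2" using i by (intro power_mono) auto
        then show ?thesis using I4 by linarith
      qed
      have b: "1 - real i * (real i / (real k + 1)) \<le> (1 - real i / (real k + 1)) ^ i"
        by (rule bern) (use ik in auto)
      have "1 - real i * (real i / (real k + 1)) \<ge> 3/4"
        using i2 by (simp add: power2_eq_square field_simps)
      with b have "(1 - real i / (real k + 1)) ^ i \<ge> 3/4" by linarith
      moreover have "1 - real i / (real k + 1) = real (k + 1 - i) / (real k + 1)"
        using ik by (simp add: field_simps of_nat_diff)
      ultimately have "real (k + 1 - i) ^ i / (real k + 1) ^ i \<ge> 3/4" by (simp add: power_divide)
      hence c: "(real k + 1) ^ i \<le> 4/3 * real (k + 1 - i) ^ i" by (simp add: field_simps)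
      have f: "fact (k - i) * real (k + 1 - i) ^ i \<le> fact k"
      proof -
        have "real (fact (k - i) * (k + 1 - i) ^ i) \<le> real (fact k)"
          using fact_low[OF ik] by (simp only: of_nat_le_iff)
        then show ?thesis by simp
      qed
      have "lam ^ i * fact (k - i) \<le> (real k + 1) ^ i * fact (k - i)"
        using True lam by (intro mult_right_mono power_mono) auto
      also have "\<dots> \<le> 4/3 * real (k + 1 - i) ^ i * fact (k - i)"
        using c by (intro mult_right_mono) auto
      also have "\<dots> \<le> 4/3 * fact k" using f by (simp add: algebra_simps)
      finally have key: "lam ^ i * fact (k - i) \<le> 4/3 * fact k" .
      have lk: "lam ^ k = lam ^ i * lam ^ (k - i)" using ik by (simp add: power_add[symmetric])
      have "lam ^ k / fact k = lam ^ (k - i) * (lam ^ i * fact (k - i)) / (fact k * fact (k - i))"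
        by (simp add: lk field_simps)
      also have "\<dots> \<le> lam ^ (k - i) * (4/3 * fact k) / (fact k * fact (k - i))"
        using key lam by (intro divide_right_mono mult_left_mono) auto
      also have "\<dots> = 4/3 * (lam ^ (k - i) / fact (k - i))" by (simp add: field_simps)
      finally have "lam ^ k / fact k \<le> 4/3 * (lam ^ (k - i) / fact (k - i))" .
      from mult_right_mono[OF this exp_ge_zero[of "-lam"]]
      show "P k \<le> 4/3 * P (k - i)" unfolding P_def by (simp add: mult.assoc)
    qed
  next
    case False
    define I where "I = nat \<lfloor>sqrt lam / 2\<rfloor>"
    have I1: "real I \<le> sqrt lam / 2" unfolding I_def by (rule natfloor) (use lam in simp)
    have I2: "sqrt lam / 2 \<le> real I + 1" unfolding I_def by (rule natfloor) (use lam in simp)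
    have I4: "real I ^ 2 \<le> lam / 4"
    proof -
      have "real I ^ 2 \<le> (sqrt lam / 2) ^ 2" using I1 by (intro power_mono) auto
      then show ?thesis using lam by (simp add: power_divide)
    qed
    show ?thesis unfolding P_def[symmetric]
    proof (rule mode_aux[OF sum1 _ _ I2 _ Pk, of "\<lambda>i. k + i"])
      show "inj_on (\<lambda>i. k + i) {..I}" by (auto simp: inj_on_def)
      show "lam > 0" using lam by simp
      fix i assume i: "i \<le> I"
      have i2: "real i ^ 2 \<le> lam / 4"
      proof -
        have "real i ^ 2 \<le> real I ^ 2" using i by (intro power_mono) auto
        then show ?thesis using I4 by linarith
      qed
      have b: "1 - real i * (real i / (lam + i)) \<le> (1 - real i / (lam + i)) ^ i"
        by (rule bern) (use lam in auto)
      have "real i * (real i / (lam + i)) \<le> real i ^ 2 / lam"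
        using lam by (simp add: power2_eq_square frac_le)
      also have "\<dots> \<le> 1/4" using i2 lam by (simp add: field_simps)
      finally have "(1 - real i / (lam + i)) ^ i \<ge> 3/4" using b by linarith
      moreover have "1 - real i / (lam + i) = lam / (lam + i)" using lam by (simp add: field_simps)
      ultimately have "lam ^ i / (lam + i) ^ i \<ge> 3/4" by (simp add: power_divide)
      hence c: "(lam + i) ^ i \<le> 4/3 * lam ^ i" using lam by (simp add: field_simps)
      have f: "fact (k + i) \<le> fact k * real (k + i) ^ i"
      proof -
        have "real (fact (k + i)) \<le> real (fact k * (k + i) ^ i)"
          using fact_up[of k i] by (simp only: of_nat_le_iff)
        then show ?thesis by simp
      qed
      have "fact (k + i) \<le> fact k * real (k + i) ^ i" by (rule f)
      also have "\<dots> \<le> fact k * (lam + i) ^ i"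
        using False by (intro mult_left_mono power_mono) auto
      also have "\<dots> \<le> fact k * (4/3 * lam ^ i)" using c by (intro mult_left_mono) auto
      finally have key: "fact (k + i) \<le> 4/3 * lam ^ i * fact k" by (simp add: algebra_simps)
      have "lam ^ k / fact k = lam ^ k * fact (k + i) / (fact k * fact (k + i))"
        by (simp add: field_simps)
      also have "\<dots> \<le> lam ^ k * (4/3 * lam ^ i * fact k) / (fact k * fact (k + i))"
        using key lam by (intro divide_right_mono mult_left_mono) auto
      also have "\<dots> = 4/3 * (lam ^ (k + i) / fact (k + i))" by (simp add: field_simps power_add)
      finally have "lam ^ k / fact k \<le> 4/3 * (lam ^ (k + i) / fact (k + i))" .
      from mult_right_mono[OF this exp_ge_zero[of "-lam"]]
      show "P k \<le> 4/3 * P (k + i)" unfolding P_def by (simp add: mult.assoc)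
    qed
  qed
qed


lemma binom_sum1: "(\<Sum>k\<le>n. binom_pmf n r k) = 1"
  using binomial_ring[of r "1 - r" n] by (simp add: binom_pmf_def atLeast0AtMost)

lemma binom_shift:
  "(\<Sum>k\<le>Suc m. f k * binom_pmf (Suc m) r k)
     = f 0 * (1 - r) ^ Suc m + (\<Sum>j\<le>m. f (Suc j) * real (Suc m choose Suc j) * r ^ Suc j * (1 - r) ^ (m - j))"
  by (subst sum.atMost_Suc_shift) (simp add: binom_pmf_def algebra_simps del: binomial_Suc_Suc of_nat_Suc power_Suc)

lemma absorb: "real (Suc j) * real (Suc m choose Suc j) = real (Suc m) * real (m choose j)"
  using binomial_absorption[of j "Suc m"] by (metis diff_Suc_1 of_nat_mult)

lemma binom_mean: "(\<Sum>k\<le>n. real k * binom_pmf n r k) = real n * r"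
proof (cases n)
  case 0 then show ?thesis by simp
next
  case (Suc m)
  have "(\<Sum>k\<le>Suc m. real k * binom_pmf (Suc m) r k)
      = (\<Sum>j\<le>m. real (Suc j) * real (Suc m choose Suc j) * r ^ Suc j * (1 - r) ^ (m - j))"
    using binom_shift[of real m r] by simp
  also have "\<dots> = (\<Sum>j\<le>m. real (Suc m) * r * binom_pmf m r j)"
    by (intro sum.cong refl) (simp only: absorb binom_pmf_def power_Suc ac_simps)
  also have "\<dots> = real (Suc m) * r * (\<Sum>j\<le>m. binom_pmf m r j)"
    by (simp only: sum_distrib_left)
  also have "\<dots> = real (Suc m) * r" by (simp only: binom_sum1 mult_1_right)
  finally show ?thesis using Suc by simp
qed

lemma binom_fm2: "(\<Sum>k\<le>n. real k * (real k - 1) * binom_pmf n r k) = real n * (real n - 1) * r^2"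
proof (cases n)
  case 0 then show ?thesis by simp
next
  case (Suc m)
  have "(\<Sum>k\<le>Suc m. real k * (real k - 1) * binom_pmf (Suc m) r k)
      = (\<Sum>j\<le>m. real (Suc j) * (real (Suc j) - 1) * real (Suc m choose Suc j) * r ^ Suc j * (1 - r) ^ (m - j))"
    using binom_shift[of "\<lambda>k. real k * (real k - 1)" m r] by simp
  also have "\<dots> = (\<Sum>j\<le>m. real (Suc m) * r * (real j * binom_pmf m r j))"
  proof (intro sum.cong refl)
    fix j
    have "real (Suc j) - 1 = real j" by simp
    then show "real (Suc j) * (real (Suc j) - 1) * real (Suc m choose Suc j) * r ^ Suc j * (1 - r) ^ (m - j)
      = real (Suc m) * r * (real j * binom_pmf m r j)"
      by (simp only: mult.commute[of "real (Suc j)"] mult.assoc absorb binom_pmf_def power_Suc) 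
         (simp only: ac_simps)
  qed
  also have "\<dots> = real (Suc m) * r * (\<Sum>j\<le>m. real j * binom_pmf m r j)"
    by (simp only: sum_distrib_left)
  also have "\<dots> = real (Suc m) * r * (real m * r)" by (simp only: binom_mean)
  finally show ?thesis using Suc by (simp add: power2_eq_square algebra_simps)
qed

lemma binom_var: "(\<Sum>k\<le>n. (real k - real n * r)^2 * binom_pmf n r k) = real n * r * (1 - r)"
proof -
  have "(\<Sum>k\<le>n. (real k - real n * r)^2 * binom_pmf n r k)
      = (\<Sum>k\<le>n. real k * (real k - 1) * binom_pmf n r k) + (1 - 2 * (real n * r)) * (\<Sum>k\<le>n. real k * binom_pmf n r k)
        + (real n * r)^2 * (\<Sum>k\<le>n. binom_pmf n r k)"
    by (simp add: sum_distrib_left sum.distrib[symmetric] power2_eq_square algebra_simps)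
  also have "\<dots> = real n * (real n - 1) * r^2 + (1 - 2 * (real n * r)) * (real n * r) + (real n * r)^2 * 1"
    by (simp only: binom_fm2 binom_mean binom_sum1)
  also have "\<dots> = real n * r * (1 - r)"
    by (simp add: power2_eq_square algebra_simps)
  finally show ?thesis .
qed

lemma binom_nonneg: "0 \<le> r \<Longrightarrow> r \<le> 1 \<Longrightarrow> binom_pmf n r k \<ge> 0"
  by (simp add: binom_pmf_def)

lemma coll_lower:
  fixes r :: real
  assumes r: "0 < r" "r < 1" and nr: "real n * r \<ge> 1"
  shows "(\<Sum>k\<le>n. (binom_pmf n r k)^2) \<ge> 1 / (11 * sqrt (real n * r))"
proof -
  define R where "R = binom_pmf n r"
  define \<mu> where "\<mu> = real n * r"
  define v where "v = real n * r * (1 - r)"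
  define h where "h = 2 * sqrt v"
  have Rnn: "R k \<ge> 0" for k using r by (simp add: R_def binom_nonneg)
  have vpos: "v > 0" using r nr by (simp add: v_def)
  have h2: "h^2 = 4 * v" using vpos by (simp add: h_def power_mult_distrib)
  define W where "W = {k\<in>{..n}. (real k - \<mu>)^2 \<le> h^2}"
  have finW: "finite W" by (simp add: W_def)
  have out: "(\<Sum>k\<in>{..n} - W. R k) \<le> 1/4"
  proof -
    have "(\<Sum>k\<in>{..n} - W. R k) \<le> (\<Sum>k\<in>{..n} - W. (real k - \<mu>)^2 / (4 * v) * R k)"
    proof (intro sum_mono)
      fix k assume "k \<in> {..n} - W"
      then have "(real k - \<mu>)^2 > 4 * v" using h2 by (auto simp: W_def)
      then have "1 \<le> (real k - \<mu>)^2 / (4 * v)" using vpos by simp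
      from mult_right_mono[OF this Rnn[of k]] show "R k \<le> (real k - \<mu>)^2 / (4 * v) * R k" by simp
    qed
    also have "\<dots> \<le> (\<Sum>k\<le>n. (real k - \<mu>)^2 / (4 * v) * R k)"
      using Rnn vpos by (intro sum_mono2) auto
    also have "\<dots> = (\<Sum>k\<le>n. (real k - \<mu>)^2 * R k) / (4 * v)"
      by (simp add: sum_divide_distrib)
    also have "\<dots> = v / (4 * v)" by (simp add: R_def \<mu>_def binom_var v_def)
    also have "\<dots> = 1/4" using vpos by simp
    finally show ?thesis .
  qed
  have "(\<Sum>k\<in>{..n} - W. R k) + (\<Sum>k\<in>W. R k) = (\<Sum>k\<le>n. R k)"
    by (rule sum.subset_diff[symmetric]) (auto simp: W_def)
  then have inW: "(\<Sum>k\<in>W. R k) \<ge> 3/4" using out by (simp add: R_def binom_sum1)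
  define a where "a = nat \<lceil>\<mu> - h\<rceil>"
  define M where "M = nat \<lceil>2*h + 1\<rceil>"
  have hnn: "h \<ge> 0" by (simp add: h_def vpos less_imp_le)
  have Wsub: "W \<subseteq> {a..<a+M}"
  proof
    fix k assume k: "k \<in> W"
    then have "(real k - \<mu>)^2 \<le> h^2" by (simp add: W_def)
    then have "\<bar>real k - \<mu>\<bar> \<le> \<bar>h\<bar>" by (simp only: abs_le_square_iff)
    then have "\<bar>real k - \<mu>\<bar> \<le> h" using hnn by simp
    then have k1: "\<mu> - h \<le> real k" and k2: "real k \<le> \<mu> + h" by auto
    have "a \<le> k" unfolding a_def using k1 by (simp add: nat_le_iff ceiling_le_iff)
    moreover have "real k < real a + real M"
    proof -
      have "real a \<ge> \<mu> - h" unfolding a_def by (rule real_nat_ceiling_ge)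
      moreover have "real M \<ge> 2*h + 1" unfolding M_def by (rule real_nat_ceiling_ge)
      ultimately show ?thesis using k2 by linarith
    qed
    ultimately show "k \<in> {a..<a+M}" by simp
  qed
  have cardW: "real (card W) \<le> 2*h + 2"
  proof -
    have "card W \<le> M" using card_mono[OF _ Wsub] by simp
    moreover have "real M \<le> 2*h + 2"
    proof -
      have "0 \<le> \<lceil>2*h + 1\<rceil>" using hnn by simp
      hence eq: "real M = of_int \<lceil>2*h + 1\<rceil>" unfolding M_def by simp
      show ?thesis using ceiling_correct[of "2*h+1"] eq by linarith
    qed
    ultimately show ?thesis by (metis of_nat_le_iff order_trans)
  qed
  have cs: "(\<Sum>k\<in>W. R k)^2 \<le> (\<Sum>k\<in>W. (R k)^2) * card W" by (rule sum_squared_le_sum_of_squares)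
  have "(3/4)^2 \<le> (\<Sum>k\<in>W. R k)^2" using inW by (intro power_mono) auto
  moreover have "((3::real)/4)^2 = 9/16" by (simp add: power2_eq_square)
  ultimately have A: "9/16 \<le> (\<Sum>k\<in>W. (R k)^2) * card W" using cs by linarith
  have sq1: "sqrt (real n * r) \<ge> 1" using nr by simp
  have "real n * r * (1 - r) \<le> real n * r * 1" using r by (intro mult_left_mono) auto
  then have "sqrt v \<le> sqrt (real n * r)" unfolding v_def by (simp only: mult_1_right real_sqrt_le_iff)
  then have "h \<le> 2 * sqrt (real n * r)" unfolding h_def by simp
  then have cW: "real (card W) \<le> 6 * sqrt (real n * r)" using cardW sq1 by linarith
  have S0: "(\<Sum>k\<in>W. (R k)^2) \<ge> 0" by (simp add: sum_nonneg)
  have "9/16 \<le> (\<Sum>k\<in>W. (R k)^2) * (6 * sqrt (real n * r))"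
    using A mult_left_mono[OF cW S0] by linarith
  then have B: "(\<Sum>k\<in>W. (R k)^2) \<ge> 1 / (11 * sqrt (real n * r))"
    using sq1 by (simp add: field_simps)
  have "(\<Sum>k\<in>W. (R k)^2) \<le> (\<Sum>k\<le>n. (R k)^2)" by (intro sum_mono2) (auto simp: W_def)
  with B show ?thesis by (simp add: R_def)
qed


lemma choose_fact_le: "real (n choose k) * fact k \<le> real n ^ k"
proof (cases "k \<le> n")
  case True
  have 1: "fact k * fact (n - k) * (n choose k) = fact n" using binomial_fact_lemma[OF True] .
  have 2: "fact (n - k + k) \<le> fact (n - k) * (n - k + k) ^ k" by (rule fact_up)
  have "fact (n - k) * ((n choose k) * fact k) \<le> fact (n - k) * n ^ k"
    using 1 2 True by (simp add: algebra_simps)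
  then have "(n choose k) * fact k \<le> n ^ k" by (simp add: fact_gt_zero)
  then have "real ((n choose k) * fact k) \<le> real (n ^ k)" by (simp only: of_nat_le_iff)
  then show ?thesis by simp
next
  case False then show ?thesis by (simp add: binomial_eq_0)
qed

lemma binom_le_pois:
  fixes r :: real assumes r: "0 < r" "r < 1" and k: "k \<le> n"
  shows "binom_pmf n r k \<le> (real n * r / (1 - r)) ^ k / fact k * (1 - r) ^ n"
proof -
  have pw: "(1 - r) ^ n = (1 - r) ^ (n - k) * (1 - r) ^ k" using k by (simp add: power_add[symmetric])
  have pos: "(1 - r) ^ k > 0" using r by simp
  have "binom_pmf n r k = real (n choose k) * fact k * r ^ k * (1 - r) ^ n / ((1 - r) ^ k * fact k)"
    unfolding binom_pmf_def pw using pos k r by (simp add: field_simps)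
  also have "\<dots> \<le> real n ^ k * r ^ k * (1 - r) ^ n / ((1 - r) ^ k * fact k)"
    using choose_fact_le[of n k] r pos
    by (intro divide_right_mono mult_right_mono) (auto intro!: mult_pos_pos)
  also have "\<dots> = (real n * r / (1 - r)) ^ k / fact k * (1 - r) ^ n"
    by (simp add: power_divide power_mult_distrib)
  finally show ?thesis .
qed

lemma coll_upper:
  fixes r :: real
  assumes r: "0 < r" "r \<le> 1/2" and nr: "real n * r \<ge> 1" and nr2: "real n * r^2 \<le> 1/2"
  shows "(\<Sum>k\<le>n. (binom_pmf n r k)^2) \<le> 3 * exp 1 / sqrt (real n * r)"
proof -
  define lam where "lam = real n * r / (1 - r)"
  define M where "M = 3 * exp 1 / sqrt (real n * r)"
  have r1: "1 - r > 0" using r by simp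
  have lamge: "lam \<ge> real n * r" unfolding lam_def using r nr
    by (simp add: field_simps)
  have lam1: "lam \<ge> 1" using lamge nr by simp
  have lamdiff: "lam - real n * r \<le> 1"
  proof -
    have "lam - real n * r = real n * r^2 / (1 - r)" unfolding lam_def using r1
      by (simp add: field_simps power2_eq_square)
    also have "\<dots> \<le> real n * r^2 / (1/2)" using r nr2
      by (intro divide_left_mono) auto
    also have "\<dots> \<le> 1" using nr2 by simp
    finally show ?thesis .
  qed
  have om: "(1 - r) ^ n \<le> exp (- (real n * r))"
  proof -
    have "(1 - r) ^ n \<le> exp (- r) ^ n" using r exp_ge_add_one_self[of "-r"] by (intro power_mono) auto
    also have "\<dots> = exp (- (real n * r))" by (simp add: exp_of_nat_mult[symmetric])
    finally show ?thesis .
  qed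
  have Rle: "binom_pmf n r k \<le> M" if "k \<le> n" for k
  proof -
    have "binom_pmf n r k \<le> lam ^ k / fact k * (1 - r) ^ n"
      using binom_le_pois[OF r(1) _ that] r unfolding lam_def by simp
    also have "\<dots> \<le> lam ^ k / fact k * exp (- (real n * r))"
      using om lam1 by (intro mult_left_mono) auto
    also have "\<dots> = (lam ^ k / fact k * exp (- lam)) * exp (lam - real n * r)"
      by (simp add: exp_diff exp_minus field_simps)
    also have "\<dots> \<le> (3 / sqrt lam) * exp 1"
      using pois_mode[OF lam1, of k] lamdiff lam1 by (intro mult_mono) auto
    also have "\<dots> \<le> (3 / sqrt (real n * r)) * exp 1"
      using lamge nr by (intro mult_right_mono divide_left_mono real_sqrt_le_mono) auto
    finally show ?thesis by (simp add: M_def)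
  qed
  have Rnn: "binom_pmf n r k \<ge> 0" for k using r by (intro binom_nonneg) auto
  have "(\<Sum>k\<le>n. (binom_pmf n r k)^2) \<le> (\<Sum>k\<le>n. binom_pmf n r k * M)"
    using Rle Rnn by (intro sum_mono) (simp add: power2_eq_square mult_left_mono)
  also have "\<dots> = M" by (simp add: sum_distrib_right[symmetric] binom_sum1)
  finally show ?thesis by (simp add: M_def)
qed

lemma amgm_sqrt: fixes a b :: real assumes "a \<ge> 0" "b \<ge> 0"
  shows "sqrt a * sqrt b \<le> (a + b) / 2"
proof -
  have "0 \<le> (sqrt a - sqrt b)^2" by simp
  then show ?thesis using assms by (simp add: power2_diff)
qed

lemma lin1: fixes S Z E p q :: real
  shows "Z \<le> (1 - p + (1 - q)) / 2 \<Longrightarrow> E = p + q - 2 * S \<Longrightarrow> X = S \<Longrightarrow> X + Z \<le> 1 - E / 2"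
  by (simp add: field_simps)

lemma lin2: fixes S Z E p q A D X:: real
  shows "A - D \<le> Z \<Longrightarrow> E = p + q - 2 * S \<Longrightarrow> F = D \<Longrightarrow> X = S \<Longrightarrow> A = 1 - (p + q) / 2 
     \<Longrightarrow> 1 - (E / 2 + F) \<le> X + Z"
  by (simp add: field_simps)

lemma Bh_upper:
  assumes "0 \<le> p" "p \<le> 1" "0 \<le> q" "q \<le> 1"
  shows "Bh p q \<le> 1 - (sqrt p - sqrt q)^2 / 2"
proof -
  have "sqrt ((1-p)*(1-q)) \<le> ((1-p) + (1-q)) / 2"
    using amgm_sqrt[of "1-p" "1-q"] assms by (simp add: real_sqrt_mult)
  moreover have "(sqrt p - sqrt q)^2 = p + q - 2 * (sqrt p * sqrt q)"
    using assms by (simp add: power2_diff)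
  moreover have "sqrt (p*q) = sqrt p * sqrt q" by (simp add: real_sqrt_mult)
  ultimately show ?thesis unfolding Bh_def using lin1 by metis
qed

lemma Bh_nonneg: "0 \<le> p \<Longrightarrow> p \<le> 1 \<Longrightarrow> 0 \<le> q \<Longrightarrow> q \<le> 1 \<Longrightarrow> 0 \<le> Bh p q"
  by (simp add: Bh_def)

lemma Bh_pow_upper:
  assumes "0 \<le> p" "p \<le> 1" "0 \<le> q" "q \<le> 1"
  shows "Bh p q ^ (2*n) \<le> exp (- (real n * (sqrt p - sqrt q)^2))"
proof -
  define x where "x = (sqrt p - sqrt q)^2 / 2"
  have "Bh p q ^ (2*n) \<le> exp (-x) ^ (2*n)"
    using Bh_upper[OF assms] exp_ge_add_one_self[of "-x"] Bh_nonneg[OF assms]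
    by (intro power_mono) (auto simp: x_def)
  also have "\<dots> = exp (- (real n * (sqrt p - sqrt q)^2))"
    by (simp add: exp_of_nat_mult[symmetric] x_def)
  finally show ?thesis .
qed

lemma Bh_lower:
  assumes q: "0 \<le> q" and qp: "q \<le> p" and p: "p \<le> 1/4"
  shows "Bh p q \<ge> 1 - ((sqrt p - sqrt q)^2 / 2 + (p - q)^2 / 4)"
proof -
  define A where "A = 1 - (p + q) / 2"
  define d where "d = (p - q) / 2"
  have eq: "(1-p)*(1-q) = A^2 - d^2" unfolding A_def d_def by (simp add: power2_eq_square field_simps)
  have d2: "d^2 \<le> 1/64"
  proof -
    have "0 \<le> d" "d \<le> 1/8" using q qp p by (auto simp: d_def)
    then have "d^2 \<le> (1/8)^2" by (intro power_mono) auto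
    then show ?thesis by (simp add: power2_eq_square)
  qed
  have A2: "2 * A - 1 \<ge> 1/2" using q qp p by (simp add: A_def)
  have nn: "A - d^2 \<ge> 0" using A2 d2 by simp
  have "A^2 - d^2 - (A - d^2)^2 = d^2 * ((2 * A - 1) - d^2)"
    by (simp add: power2_eq_square algebra_simps)
  also have "\<dots> \<ge> 0" using A2 d2 by (intro mult_nonneg_nonneg) auto
  finally have "(A - d^2)^2 \<le> A^2 - d^2" by simp
  then have "sqrt ((A - d^2)^2) \<le> sqrt (A^2 - d^2)" by (rule real_sqrt_le_mono)
  then have s: "A - d^2 \<le> sqrt ((1-p)*(1-q))" using nn eq by simp
  have pp: "0 \<le> p" using q qp by simp
  have "(sqrt p - sqrt q)^2 = p + q - 2 * (sqrt p * sqrt q)"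
    using q pp by (simp add: power2_diff)
  moreover have "(p - q)^2 / 4 = d^2" by (simp add: d_def power_divide)
  moreover have "sqrt (p*q) = sqrt p * sqrt q" by (simp add: real_sqrt_mult)
  moreover have "A = 1 - (p + q) / 2" by (simp add: A_def)
  ultimately show ?thesis using s unfolding Bh_def by (metis lin2)
qed


lemma Pnpq_tilt:
  assumes q: "0 < q" and qp: "q \<le> p" and p: "p < 1"
  shows "Pnpq n p q = Bh p q ^ (2*n) *
    (\<Sum>x\<le>n. \<Sum>y\<le>n. if x \<le> y then (tt p q ^ x / tt p q ^ y) * binom_pmf n (rr p q) x * binom_pmf n (rr p q) y else 0)"
proof -
  have mx: "max p q = p" "min p q = q" using qp by auto
  have "Pnpq n p q = (\<Sum>x\<le>n. \<Sum>y\<le>n. if x \<le> y then binom_pmf n p x * binom_pmf n q y else 0)"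
    unfolding Pnpq_def Pmnpq_def mx by simp
  also have "\<dots> = (\<Sum>x\<le>n. \<Sum>y\<le>n. Bh p q ^ (2*n) * (if x \<le> y then (tt p q ^ x / tt p q ^ y) * binom_pmf n (rr p q) x * binom_pmf n (rr p q) y else 0))"
    using tilt_prod[of p q] q qp p by (intro sum.cong refl) (auto simp: algebra_simps)
  also have "\<dots> = Bh p q ^ (2*n) *
    (\<Sum>x\<le>n. \<Sum>y\<le>n. if x \<le> y then (tt p q ^ x / tt p q ^ y) * binom_pmf n (rr p q) x * binom_pmf n (rr p q) y else 0)"
    by (simp add: sum_distrib_left)
  finally show ?thesis .
qed

locale core_setup =
  fixes n :: nat and p q :: real
  assumes q: "0 < q" and qp: "q \<le> p" and p: "p \<le> 1/4"
    and ng: "real n * sqrt (p*q) \<ge> 1" and ng2: "real n * (p*q) \<le> 1/8" and np2: "real n * p^2 \<le> 1/5"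
begin

definition "g = sqrt (p*q)"

lemma pos: "0 < p" "p < 1" "0 < g" "g \<le> p"
proof -
  show "0 < p" "p < 1" using q qp p by auto
  show "0 < g" using q qp by (simp add: g_def)
  have "sqrt (p*q) \<le> sqrt (p*p)" using q qp by (intro real_sqrt_le_mono mult_left_mono) auto
  then show "g \<le> p" using q qp by (simp add: g_def)
qed

lemma B_bounds: "Bh p q \<le> 1" "Bh p q \<ge> 1/2"
proof -
  have "Bh p q \<le> 1 - (sqrt p - sqrt q)^2/2" by (rule Bh_upper) (use pos q qp in auto)
  moreover have "(sqrt p - sqrt q)^2 \<ge> 0" by simp
  ultimately show "Bh p q \<le> 1" by linarith
  have "(3/4)*(3/4) \<le> (1-p)*(1-q)" using q qp p by (intro mult_mono) auto
  then have "sqrt ((1-p)*(1-q)) \<ge> sqrt (1/4)" by (intro real_sqrt_le_mono) simp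
  moreover have "sqrt (1/4::real) = 1/2" by (simp add: real_sqrt_divide)
  moreover have "sqrt (p*q) \<ge> 0" using pos q by simp
  ultimately show "Bh p q \<ge> 1/2" unfolding Bh_def by linarith
qed

lemma r_bounds: "rr p q \<ge> g" "rr p q \<le> 2 * g"
proof -
  have Bp: "Bh p q > 0" using B_bounds by simp
  show "rr p q \<ge> g" unfolding rr_def g_def[symmetric] using B_bounds pos Bp
    by (simp add: field_simps mult_left_le_one_le less_imp_le)
  show "rr p q \<le> 2 * g" unfolding rr_def g_def[symmetric] using B_bounds pos Bp
    by (simp add: field_simps)
qed

lemma r_props: "0 < rr p q" "rr p q \<le> 1/2" "real n * rr p q \<ge> 1" "real n * (rr p q)^2 \<le> 1/2"
    "rr p q < 1"
proof -
  show "0 < rr p q" using r_bounds pos by simp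
  show "rr p q \<le> 1/2" using r_bounds pos p by simp
  then show "rr p q < 1" by simp
  have "real n * rr p q \<ge> real n * g" using r_bounds by (simp add: mult_left_mono)
  then show "real n * rr p q \<ge> 1" using ng by (simp add: g_def)
  have "(rr p q)^2 \<le> (2*g)^2" using r_bounds pos by (intro power_mono) auto
  also have "\<dots> = 4 * (p*q)" using q qp by (simp add: g_def power_mult_distrib)
  finally have "real n * (rr p q)^2 \<le> real n * (4 * (p*q))" by (simp add: mult_left_mono)
  then show "real n * (rr p q)^2 \<le> 1/2" using ng2 by simp
qed

lemma Bpow_lower: "Bh p q ^ (2*n) \<ge> exp (-1) * exp (- (real n * (sqrt p - sqrt q)^2))"
proof -
  define w where "w = (sqrt p - sqrt q)^2 / 2 + (p - q)^2 / 4"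
  have sq: "(sqrt p - sqrt q)^2 \<le> p"
  proof -
    have "0 \<le> sqrt p - sqrt q" "sqrt p - sqrt q \<le> sqrt p" using q qp by auto
    then have "(sqrt p - sqrt q)^2 \<le> (sqrt p)^2" by (intro power_mono) auto
    then show ?thesis using pos by simp
  qed
  have pq2: "(p - q)^2 \<le> p^2" using q qp by (intro power_mono) auto
  have p2: "p^2 \<le> p / 4" using pos p by (simp add: power2_eq_square mult_left_le_one_le)
  have w0: "0 \<le> w" by (simp add: w_def)
  have wp: "w \<le> p" using sq pq2 p2 pos by (simp add: w_def)
  have wh: "w \<le> 1/2" using wp p by simp
  have Bl: "Bh p q \<ge> 1 - w" using Bh_lower[of q p] q qp p by (simp add: w_def)
  have "(1 - w) ^ (2*n) \<le> Bh p q ^ (2*n)" using Bl wh by (intro power_mono) auto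
  moreover have "(1 - w) ^ (2*n) = exp (real (2*n) * ln (1 - w))"
  proof -
    have "exp (real (2*n) * ln (1 - w)) = exp (ln (1 - w)) ^ (2*n)" by (rule exp_of_nat_mult)
    then show ?thesis using wh by simp
  qed
  moreover have "real (2*n) * ln (1 - w) \<ge> real (2*n) * (- w - 2 * w^2)"
    using ln_one_minus_pos_lower_bound[OF w0 wh] by (intro mult_left_mono) auto
  moreover have "real (2*n) * (- w - 2 * w^2) \<ge> -1 - real n * (sqrt p - sqrt q)^2"
  proof -
    have w2: "w^2 \<le> p^2" using w0 wp by (intro power_mono) auto
    have "real n * (p - q)^2 \<le> real n * p^2" using pq2 by (simp add: mult_left_mono)
    moreover have "real n * w^2 \<le> real n * p^2" using w2 by (simp add: mult_left_mono)
    ultimately show ?thesis using np2 by (simp add: w_def algebra_simps)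
  qed
  ultimately have "exp (-1 - real n * (sqrt p - sqrt q)^2) \<le> Bh p q ^ (2*n)"
    by (metis exp_le_cancel_iff order_trans)
  then show ?thesis by (simp add: exp_add[symmetric])
qed

lemma S_lower: "(\<Sum>k\<le>n. (binom_pmf n (rr p q) k)^2) \<ge> 1 / (16 * sqrt (real n * g))"
proof -
  have "1 / (11 * sqrt (real n * rr p q)) \<le> (\<Sum>k\<le>n. (binom_pmf n (rr p q) k)^2)"
    using coll_lower[of "rr p q" n] r_props by simp
  moreover have "11 * sqrt (real n * rr p q) \<le> 16 * sqrt (real n * g)"
  proof -
    have "sqrt (real n * rr p q) \<le> sqrt (2 * (real n * g))"
      using mult_left_mono[OF r_bounds(2), of "real n"] by (intro real_sqrt_le_mono) simp
    also have "\<dots> = sqrt 2 * sqrt (real n * g)" by (simp add: real_sqrt_mult)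
    finally have "11 * sqrt (real n * rr p q) \<le> 11 * sqrt 2 * sqrt (real n * g)" by simp
    moreover have "11 * sqrt 2 \<le> (16::real)"
    proof -
      have "sqrt 2 \<le> sqrt ((16/11)^2::real)" by (intro real_sqrt_le_mono) (simp add: power2_eq_square)
      then show ?thesis by simp
    qed
    moreover have "sqrt (real n * g) \<ge> 0" using pos by simp
    ultimately show ?thesis using mult_right_mono[of "11 * sqrt 2" 16 "sqrt (real n * g)"] by linarith
  qed
  moreover have "1 / (16 * sqrt (real n * g)) \<le> 1 / (11 * sqrt (real n * rr p q))"
  proof (rule divide_left_mono)
    show "11 * sqrt (real n * rr p q) \<le> 16 * sqrt (real n * g)" by fact
    have s1: "sqrt (real n * rr p q) > 0" using r_props by simp
    have "real n * g \<ge> 1" using ng unfolding g_def .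
    then have s2: "sqrt (real n * g) > 0" by simp
    from s1 s2 show "0 < 16 * sqrt (real n * g) * (11 * sqrt (real n * rr p q))" by simp
  qed simp
  ultimately show ?thesis by linarith
qed

lemma S_upper: "(\<Sum>k\<le>n. (binom_pmf n (rr p q) k)^2) \<le> 3 * exp 1 / sqrt (real n * g)"
proof -
  have "(\<Sum>k\<le>n. (binom_pmf n (rr p q) k)^2) \<le> 3 * exp 1 / sqrt (real n * rr p q)"
    using coll_upper[of "rr p q" n] r_props by simp
  also have "\<dots> \<le> 3 * exp 1 / sqrt (real n * g)"
    using r_bounds ng pos r_props(3) by (intro divide_left_mono real_sqrt_le_mono mult_left_mono mult_pos_pos) (auto simp: g_def)
  finally show ?thesis .
qed

lemma core_lower:
  "Pnpq n p q \<ge> exp (-1) * exp (- (real n * (sqrt p - sqrt q)^2)) / (16 * sqrt (real n * g))"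
proof -
  let ?S = "\<Sum>x\<le>n. \<Sum>y\<le>n. if x \<le> y then (tt p q ^ x / tt p q ^ y) * binom_pmf n (rr p q) x * binom_pmf n (rr p q) y else 0"
  have "q < 1" using qp pos by simp
  then have tpos: "tt p q > 0" using pos q by (simp add: tt_def)
  have "(\<Sum>k\<le>n. (binom_pmf n (rr p q) k)^2) \<le> ?S"
    by (rule tilted_sum_lower[OF tpos]) (use r_props in \<open>auto intro: binom_nonneg\<close>)
  then have "?S \<ge> 1 / (16 * sqrt (real n * g))" using S_lower by linarith
  moreover have "Bh p q ^ (2*n) \<ge> exp (-1) * exp (- (real n * (sqrt p - sqrt q)^2))" by (rule Bpow_lower)
  moreover have "exp (-1) * exp (- (real n * (sqrt p - sqrt q)^2)) \<ge> 0" by simp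
  moreover have "1 / (16 * sqrt (real n * g)) \<ge> 0" using pos by simp
  ultimately have "Bh p q ^ (2*n) * ?S \<ge> exp (-1) * exp (- (real n * (sqrt p - sqrt q)^2)) * (1 / (16 * sqrt (real n * g)))"
    by (intro mult_mono) auto
  then show ?thesis using Pnpq_tilt[OF q qp pos(2)] by simp
qed

lemma core_upper:
  assumes qlp: "q < p"
  shows "Pnpq n p q \<le> exp (- (real n * (sqrt p - sqrt q)^2)) * (sqrt p / (sqrt p - sqrt q)) * (3 * exp 1 / sqrt (real n * g))"
proof -
  let ?S = "\<Sum>x\<le>n. \<Sum>y\<le>n. if x \<le> y then (tt p q ^ x / tt p q ^ y) * binom_pmf n (rr p q) x * binom_pmf n (rr p q) y else 0"
  have sqlt: "sqrt q < sqrt p" using qlp by simp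
  have sq0: "sqrt q > 0" using q by simp
  have tge: "tt p q \<ge> sqrt p / sqrt q"
  proof -
    have "p * (1 - q) \<ge> p * (1 - p)" "q * (1 - p) \<le> p * (1 - p)" using q qp pos by (auto intro!: mult_left_mono mult_right_mono)
    then have "p * (1 - q) / (q * (1 - p)) \<ge> p / q" using q pos qp
      by (simp add: field_simps)
    then have "sqrt (p * (1 - q) / (q * (1 - p))) \<ge> sqrt (p / q)" by (rule real_sqrt_le_mono)
    then show ?thesis by (simp add: tt_def real_sqrt_divide)
  qed
  have "sqrt p / sqrt q > 1" using sqlt sq0 by simp
  with tge have t1: "tt p q > 1" by linarith
  have tfrac: "tt p q / (tt p q - 1) \<le> sqrt p / (sqrt p - sqrt q)"
  proof -
    have "tt p q / (tt p q - 1) = 1 / (1 - 1 / tt p q)" using t1 by (simp add: field_simps)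
    also have "\<dots> \<le> 1 / (1 - sqrt q / sqrt p)"
    proof -
      have "1 / tt p q \<le> 1 / (sqrt p / sqrt q)" using tge sq0 sqlt t1
        by (intro divide_left_mono) auto
      then have "1 / tt p q \<le> sqrt q / sqrt p" by simp
      moreover have "sqrt q / sqrt p < 1" using sqlt sq0 by simp
      ultimately show ?thesis by (intro divide_left_mono mult_pos_pos) auto
    qed
    also have "\<dots> = sqrt p / (sqrt p - sqrt q)" using sq0 sqlt by (simp add: field_simps)
    finally show ?thesis .
  qed
  have nnfrac: "0 \<le> sqrt p / (sqrt p - sqrt q)" by (rule divide_nonneg_pos) (use sqlt pos in auto)
  have Rnn: "\<And>k. binom_pmf n (rr p q) k \<ge> 0" using r_props by (intro binom_nonneg) auto
  have "?S \<le> tt p q / (tt p q - 1) * (\<Sum>k\<le>n. (binom_pmf n (rr p q) k)^2)"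
    by (rule tilted_sum_upper[OF t1 Rnn])
  also have "\<dots> \<le> sqrt p / (sqrt p - sqrt q) * (3 * exp 1 / sqrt (real n * g))"
    by (rule mult_mono[OF tfrac S_upper nnfrac]) (auto intro: sum_nonneg)
  finally have Sle: "?S \<le> \<dots>" .
  have B: "Bh p q ^ (2*n) \<le> exp (- (real n * (sqrt p - sqrt q)^2))"
    using Bh_pow_upper[of p q n] pos q qp by simp
  have "(\<Sum>k\<le>n. (binom_pmf n (rr p q) k)^2) \<le> ?S" using t1 by (intro tilted_sum_lower Rnn) simp
  moreover have "(\<Sum>k\<le>n. (binom_pmf n (rr p q) k)^2) \<ge> 0" by (simp add: sum_nonneg)
  ultimately have S0: "?S \<ge> 0" by linarith
  have "Pnpq n p q = Bh p q ^ (2*n) * ?S" by (rule Pnpq_tilt[OF q qp pos(2)])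
  also have "\<dots> \<le> exp (- (real n * (sqrt p - sqrt q)^2)) * (sqrt p / (sqrt p - sqrt q) * (3 * exp 1 / sqrt (real n * g)))"
    using mult_mono[OF B Sle _ S0] by simp
  finally show ?thesis by (simp add: mult.assoc)
qed

end


lemma Pnpq_sym: "Pnpq n x y = Pnpq n y x"
  unfolding Pnpq_def Pmnpq_def by (simp only: max.commute[of y x] min.commute[of y x])

lemma sqrt_le_self: fixes x :: real assumes "1 \<le> x" shows "sqrt x \<le> x"
proof -
  have s1: "sqrt x \<ge> 1" by (rule real_sqrt_ge_one) fact
  have "sqrt x * 1 \<le> sqrt x * sqrt x" using mult_left_mono[OF s1, of "sqrt x"] s1 by simp
  then show ?thesis using assms by simp
qed

lemma exp_half_ln: "L > 0 \<Longrightarrow> exp (ln L / 2) = sqrt L"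
proof -
  assume L: "L > 0"
  have "exp (ln L / 2) ^ 2 = L" using L by (simp add: exp_of_nat_mult[symmetric])
  then show ?thesis using real_sqrt_unique[of "exp (ln L / 2)" L] by simp
qed

lemma pointwise_ord:
  fixes a b C L :: real and n :: nat
  assumes C1: "C \<ge> 1" and ab: "1/C \<le> b" "b \<le> a" "a \<le> C"
    and n: "n > 0" and L: "L = ln (real n)" "L \<ge> 1"
    and c1: "C * L / real n \<le> 1/4" and c2: "L / C \<ge> 1" and c3: "C^2 * L^2 / real n \<le> 1/8"
  defines "D \<equiv> a + b - 2 * sqrt (a * b)"
  defines "E \<equiv> (D - 1) * L + ln L / 2"
  shows "real n * Pnpq n (a * L / real n) (b * L / real n) \<ge> exp (-1) / (16 * sqrt C) * exp (- E)"
    and "D \<ge> 1/2 \<Longrightarrow> real n * Pnpq n (a * L / real n) (b * L / real n) \<le> 6 * exp 1 * C^2 * exp (- E)"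
proof -
  define x where "x = L / real n"
  define p where "p = a * x"
  define q where "q = b * x"
  have Cpos: "C > 0" using C1 by simp
  have "1/C > 0" using Cpos by simp
  then have b0: "b > 0" using ab by linarith
  have a0: "a > 0" using ab b0 by simp
  have Lpos: "L > 0" using L(2) by linarith
  have x0: "x > 0" unfolding x_def using Lpos n by simp
  have nx: "real n * x = L" using n by (simp add: x_def)
  have pe: "a * L / real n = p" "b * L / real n = q" by (simp_all add: p_def q_def x_def)
  have sqab: "sqrt (a*b) \<ge> 1/C"
  proof -
    have "(1/C) * (1/C) \<le> a * b" using ab Cpos a0 b0 by (intro mult_mono) auto
    then have "sqrt ((1/C)^2) \<le> sqrt (a*b)" by (intro real_sqrt_le_mono) (simp add: power2_eq_square)
    then show ?thesis using Cpos by simp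
  qed
  have sqabC: "sqrt (a*b) \<le> C"
  proof -
    have "a * b \<le> C * C" using ab b0 by (intro mult_mono) auto
    then have "sqrt (a*b) \<le> sqrt (C^2)" by (intro real_sqrt_le_mono) (simp add: power2_eq_square)
    then show ?thesis using Cpos by simp
  qed
  have sqpq: "sqrt (p*q) = sqrt (a*b) * x"
  proof -
    have "p*q = (a*b) * x^2" by (simp add: p_def q_def power2_eq_square)
    then show ?thesis using x0 by (simp add: real_sqrt_mult)
  qed
  have Ddef: "(sqrt a - sqrt b)^2 = D" using a0 b0 by (simp add: D_def power2_diff real_sqrt_mult)
  have diffsq: "(sqrt p - sqrt q)^2 = D * x"
  proof -
    have "sqrt p - sqrt q = (sqrt a - sqrt b) * sqrt x" by (simp add: p_def q_def real_sqrt_mult algebra_simps)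
    then have "(sqrt p - sqrt q)^2 = (sqrt a - sqrt b)^2 * x" using x0 by (simp add: power_mult_distrib)
    then show ?thesis using Ddef by simp
  qed
  have ng_eq: "real n * sqrt (p*q) = L * sqrt (a*b)" using nx sqpq by (simp add: algebra_simps)
  have nD: "real n * (sqrt p - sqrt q)^2 = L * D" using nx diffsq by (simp add: algebra_simps)
  have ax: "a * x \<le> C * x" "b * x \<le> C * x" using ab x0 by (auto intro: mult_right_mono)
  have Cx: "C * x \<le> 1/4" using c1 by (simp add: x_def)
  have C2x: "real n * (C*x)^2 \<le> 1/8"
  proof -
    have "real n * (C*x)^2 = C^2 * L^2 / real n" using n by (simp add: x_def power2_eq_square field_simps)
    then show ?thesis using c3 by simp
  qed
  interpret core_setup n p q
  proof
    show "0 < q" using b0 x0 by (simp add: q_def)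
    show "q \<le> p" using ab x0 by (simp add: p_def q_def mult_right_mono)
    show "p \<le> 1/4" using ax Cx by (simp add: p_def)
    show "real n * sqrt (p*q) \<ge> 1"
    proof -
      have "L * (1/C) \<le> L * sqrt (a*b)" using sqab L by (intro mult_left_mono) auto
      then show ?thesis using ng_eq c2 by simp
    qed
    have pq: "p * q \<le> (C*x)^2" using ax a0 b0 x0 by (simp add: p_def q_def power2_eq_square mult_mono)
    have "real n * (p*q) \<le> real n * (C*x)^2" using pq by (simp add: mult_left_mono)
    then show "real n * (p*q) \<le> 1/8" using C2x by simp
    have pp: "p^2 \<le> (C*x)^2" using ax a0 x0 by (intro power_mono) (auto simp: p_def)
    have "real n * p^2 \<le> real n * (C*x)^2" using pp by (simp add: mult_left_mono)
    then show "real n * p^2 \<le> 1/5" using C2x by simp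
  qed
  have L0: "L > 0" using L by simp
  have expE: "real n * exp (- (L * D)) / sqrt L = exp (- E)"
  proof -
    have "real n = exp L" using n L by simp
    then have "real n * exp (- (L * D)) / sqrt L = exp L * exp (- (L * D)) / exp (ln L / 2)"
      using exp_half_ln[OF L0] by simp
    also have "\<dots> = exp (L - L * D - ln L / 2)" by (simp add: exp_diff exp_add[symmetric])
    also have "L - L * D - ln L / 2 = - E" by (simp add: E_def algebra_simps)
    finally show ?thesis .
  qed
  have sqL: "sqrt (L * sqrt (a*b)) \<le> sqrt L * sqrt C"
    using sqabC L0 by (simp add: real_sqrt_mult[symmetric] mult_left_mono)
  have "sqrt (a*b) > 0" using a0 b0 by simp
  then have sqLpos: "sqrt (L * sqrt (a*b)) > 0" using L0 by simp
  show "real n * Pnpq n (a * L / real n) (b * L / real n) \<ge> exp (-1) / (16 * sqrt C) * exp (- E)"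
  proof -
    have "real n * Pnpq n p q \<ge> real n * (exp (-1) * exp (- (L * D)) / (16 * sqrt (L * sqrt (a*b))))"
      using core_lower nD ng_eq unfolding g_def by (intro mult_left_mono) auto
    also have "real n * (exp (-1) * exp (- (L * D)) / (16 * sqrt (L * sqrt (a*b))))
        \<ge> real n * (exp (-1) * exp (- (L * D)) / (16 * (sqrt L * sqrt C)))"
      using sqL sqLpos L0 Cpos by (intro mult_left_mono divide_left_mono mult_pos_pos) auto
    also have "real n * (exp (-1) * exp (- (L * D)) / (16 * (sqrt L * sqrt C)))
        = exp (-1) / (16 * sqrt C) * (real n * exp (- (L * D)) / sqrt L)" by (simp add: field_simps)
    finally show ?thesis using expE pe by simp
  qed
  assume D2: "D \<ge> 1/2"
  have "sqrt a \<ge> sqrt b" using ab by simp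
  then have sqD: "sqrt a - sqrt b = sqrt D" using Ddef[symmetric] by simp
  have "sqrt D \<ge> sqrt (1/4)" using D2 by (intro real_sqrt_le_mono) simp
  then have sD: "sqrt a - sqrt b \<ge> 1/2" using sqD by (simp add: real_sqrt_divide)
  have ba: "b < a"
  proof (rule ccontr)
    assume "\<not> b < a" then have "a = b" using ab by simp
    then have "D = 0" using b0 by (simp add: D_def)
    then show False using D2 by simp
  qed
  have qp: "q < p" using ba x0 by (simp add: p_def q_def)
  have ratio: "sqrt p / (sqrt p - sqrt q) \<le> 2 * C"
  proof -
    have e1: "sqrt p - sqrt q = (sqrt a - sqrt b) * sqrt x" by (simp add: p_def q_def real_sqrt_mult algebra_simps)
    have e2: "sqrt p = sqrt a * sqrt x" by (simp add: p_def real_sqrt_mult)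
    have "sqrt x \<noteq> 0" using x0 by simp
    then have "sqrt p / (sqrt p - sqrt q) = sqrt a / (sqrt a - sqrt b)"
      by (subst e1, subst e2, rule mult_divide_mult_cancel_right)
    also have "\<dots> \<le> sqrt a / (1/2)" using sD a0 ba by (intro divide_left_mono) auto
    also have "\<dots> \<le> C / (1/2)"
    proof -
      have "sqrt a \<le> sqrt C" using ab by simp
      also have "sqrt C \<le> C" using C1 by (rule sqrt_le_self)
      finally show ?thesis by (intro divide_right_mono) auto
    qed
    finally show ?thesis by simp
  qed
  have sqL2: "sqrt (L * sqrt (a*b)) \<ge> sqrt L / C"
  proof -
    have "sqrt L / C \<le> sqrt L / sqrt C"
    proof -
      have "sqrt C \<le> C" using C1 by (rule sqrt_le_self)
      then show ?thesis using C1 L0 by (intro divide_left_mono) auto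
    qed
    also have "\<dots> = sqrt (L * (1/C))" by (simp add: real_sqrt_mult real_sqrt_divide)
    also have "\<dots> \<le> sqrt (L * sqrt (a*b))" using sqab L0 by (intro real_sqrt_le_mono mult_left_mono) auto
    finally show ?thesis .
  qed
  have "real n * Pnpq n p q \<le> real n * (exp (- (L * D)) * (2 * C) * (3 * exp 1 / (sqrt L / C)))"
  proof -
    have "Pnpq n p q \<le> exp (- (L * D)) * (sqrt p / (sqrt p - sqrt q)) * (3 * exp 1 / sqrt (L * sqrt (a*b)))"
      using core_upper[OF qp] nD ng_eq unfolding g_def by simp
    also have "\<dots> \<le> exp (- (L * D)) * (2 * C) * (3 * exp 1 / (sqrt L / C))"
    proof -
      have sqlt: "sqrt q < sqrt p" using qp by simp
      have r2: "3 * exp 1 / sqrt (L * sqrt (a*b)) \<le> 3 * exp 1 / (sqrt L / C)"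
      proof (rule divide_left_mono[OF sqL2])
        show "0 < sqrt (L * sqrt (a * b)) * (sqrt L / C)" using sqLpos L0 Cpos by simp
      qed simp
      have r1: "exp (- (L * D)) * (sqrt p / (sqrt p - sqrt q)) \<le> exp (- (L * D)) * (2 * C)"
        by (rule mult_left_mono[OF ratio]) simp
      show ?thesis
        by (rule mult_mono[OF r1 r2]) (use Cpos sqLpos in simp_all)
    qed
    finally show ?thesis by (intro mult_left_mono) auto
  qed
  also have "\<dots> = 6 * exp 1 * C^2 * (real n * exp (- (L * D)) / sqrt L)"
    by (simp add: field_simps power2_eq_square)
  finally show "real n * Pnpq n (a * L / real n) (b * L / real n) \<le> 6 * exp 1 * C^2 * exp (- E)"
    using expE pe by simp
qed


lemma lims:
  "((\<lambda>n. ln (real n) ^ 2 / real n) \<longlongrightarrow> 0) sequentially"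
  "((\<lambda>n. ln (real n) / real n) \<longlongrightarrow> 0) sequentially"
  "filterlim (\<lambda>n. ln (real n)) at_top sequentially"
  by real_asymp+

lemma pointwise_gen:
  fixes a b C L :: real and n :: nat
  assumes C1: "C \<ge> 1" and ab: "1/C \<le> a" "a \<le> C" "1/C \<le> b" "b \<le> C"
    and n: "n > 0" and L: "L = ln (real n)" "L \<ge> 1"
    and c1: "C * L / real n \<le> 1/4" and c2: "L / C \<ge> 1" and c3: "C^2 * L^2 / real n \<le> 1/8"
  shows "real n * Pnpq n (a * L / real n) (b * L / real n)
           \<ge> exp (-1) / (16 * sqrt C) * exp (- ((a + b - 2 * sqrt (a * b) - 1) * L + ln L / 2))"
    and "a + b - 2 * sqrt (a * b) \<ge> 1/2 \<Longrightarrow> real n * Pnpq n (a * L / real n) (b * L / real n)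
           \<le> 6 * exp 1 * C^2 * exp (- ((a + b - 2 * sqrt (a * b) - 1) * L + ln L / 2))"
proof -
  have symE: "(b + a - 2 * sqrt (b * a) - 1) = (a + b - 2 * sqrt (a * b) - 1)" by (simp add: mult.commute)
  have symP: "Pnpq n (b * L / real n) (a * L / real n) = Pnpq n (a * L / real n) (b * L / real n)"
    by (rule Pnpq_sym)
  show "real n * Pnpq n (a * L / real n) (b * L / real n)
           \<ge> exp (-1) / (16 * sqrt C) * exp (- ((a + b - 2 * sqrt (a * b) - 1) * L + ln L / 2))"
  proof (cases "b \<le> a")
    case True
    show ?thesis using pointwise_ord(1)[OF C1 ab(3) True ab(2) n L c1 c2 c3] by simp
  next
    case False
    then have "a \<le> b" by simp
    from pointwise_ord(1)[OF C1 ab(1) this ab(4) n L c1 c2 c3] show ?thesis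
      using symE symP by simp
  qed
  assume D: "a + b - 2 * sqrt (a * b) \<ge> 1/2"
  show "real n * Pnpq n (a * L / real n) (b * L / real n)
           \<le> 6 * exp 1 * C^2 * exp (- ((a + b - 2 * sqrt (a * b) - 1) * L + ln L / 2))"
  proof (cases "b \<le> a")
    case True
    show ?thesis using pointwise_ord(2)[OF C1 ab(3) True ab(2) n L c1 c2 c3] D by simp
  next
    case False
    then have "a \<le> b" by simp
    moreover have "b + a - 2 * sqrt (b * a) \<ge> 1/2" using D by (simp add: mult.commute add.commute)
    ultimately show ?thesis using pointwise_ord(2)[OF C1 ab(1) \<open>a \<le> b\<close> ab(4) n L c1 c2 c3] symE symP
      by simp
  qed
qed

theorem proposition2p8:
  fixes a b :: "nat \<Rightarrow> real"
  assumes apos: "\<And>n. a n > 0" and bpos: "\<And>n. b n > 0"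
    and bdd: "\<exists>C. \<forall>\<^sub>F n in sequentially.
                 1 / C \<le> a n \<and> a n \<le> C \<and> 1 / C \<le> b n \<and> b n \<le> C"
  shows "(\<lambda>n. Pnpq n (a n * ln (real n) / real n) (b n * ln (real n) / real n))
            \<in> o(\<lambda>n. 1 / real n)
         \<longleftrightarrow> filterlim (\<lambda>n. (a n + b n - 2 * sqrt (a n * b n) - 1) * ln (real n)
                              + ln (ln (real n)) / 2) at_top sequentially"
proof -
  define f where "f n = Pnpq n (a n * ln (real n) / real n) (b n * ln (real n) / real n)" for n
  define E where "E n = (a n + b n - 2 * sqrt (a n * b n) - 1) * ln (real n) + ln (ln (real n)) / 2" for n
  obtain C where evC: "\<forall>\<^sub>F n in sequentially. 1 / C \<le> a n \<and> a n \<le> C \<and> 1 / C \<le> b n \<and> b n \<le> C"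
    using bdd by blast
  have C1: "C \<ge> 1"
  proof -
    obtain N where N: "\<And>n. n \<ge> N \<Longrightarrow> 1 / C \<le> a n \<and> a n \<le> C" using evC
      unfolding eventually_sequentially by blast
    from N[of N] apos[of N] have h: "1 / C \<le> a N" "a N \<le> C" "a N > 0" by auto
    then have Cp: "C > 0" by linarith
    have "1 / C \<le> C" using h by linarith
    then have "1 \<le> C * C" using Cp by (simp add: field_simps)
    show ?thesis
    proof (rule ccontr)
      assume "\<not> C \<ge> 1" then have "C < 1" by simp
      then have "C * C < 1 * 1" using Cp by (intro mult_strict_mono) auto
      with \<open>1 \<le> C * C\<close> show False by simp
    qed
  qed
  have Cpos: "C > 0" using C1 by simp
  have ev_n: "\<forall>\<^sub>F n in sequentially. n > 0" by (rule eventually_gt_at_top)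
  have ev_L: "\<forall>\<^sub>F n in sequentially. ln (real n) \<ge> max 1 C"
  proof -
    have "\<forall>Z. \<forall>\<^sub>F n in sequentially. Z \<le> ln (real n)" using lims(3) by (simp add: filterlim_at_top)
    then show ?thesis by blast
  qed
  have ev_c1: "\<forall>\<^sub>F n in sequentially. C * ln (real n) / real n \<le> 1/4"
  proof -
    have "((\<lambda>n. C * (ln (real n) / real n)) \<longlongrightarrow> C * 0) sequentially"
      by (intro tendsto_mult tendsto_const lims(2))
    then have "\<forall>\<^sub>F n in sequentially. C * (ln (real n) / real n) < 1/4"
      by (intro order_tendstoD(2)) auto
    then show ?thesis by eventually_elim simp
  qed
  have ev_c3: "\<forall>\<^sub>F n in sequentially. C^2 * ln (real n) ^ 2 / real n \<le> 1/8"
  proof -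
    have "((\<lambda>n. C^2 * (ln (real n) ^ 2 / real n)) \<longlongrightarrow> C^2 * 0) sequentially"
      by (intro tendsto_mult tendsto_const lims(1))
    then have "\<forall>\<^sub>F n in sequentially. C^2 * (ln (real n) ^ 2 / real n) < 1/8"
      by (intro order_tendstoD(2)) auto
    then show ?thesis by eventually_elim simp
  qed
  define c where "c = exp (-1) / (16 * sqrt C)"
  define K where "K = 6 * exp 1 * C^2"
  have cpos: "c > 0" using Cpos by (simp add: c_def)
  have good: "\<forall>\<^sub>F n in sequentially. c * exp (- E n) \<le> real n * f n \<and>
       (a n + b n - 2 * sqrt (a n * b n) \<ge> 1/2 \<longrightarrow> real n * f n \<le> K * exp (- E n))"
    using evC ev_n ev_L ev_c1 ev_c3
  proof eventually_elim
    case (elim n)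
    have L1: "ln (real n) \<ge> 1" and L2: "ln (real n) / C \<ge> 1" using elim Cpos by (auto simp: field_simps)
    note P = pointwise_gen[of C "a n" "b n" n "ln (real n)", OF C1 _ _ _ _ _ refl L1 _ L2]
    show ?case using P elim unfolding f_def E_def c_def K_def by auto
  qed
  show ?thesis
  proof
    assume o: "(\<lambda>n. Pnpq n (a n * ln (real n) / real n) (b n * ln (real n) / real n)) \<in> o(\<lambda>n. 1 / real n)"
    have "((\<lambda>n. f n / (1 / real n)) \<longlongrightarrow> 0) sequentially"
      using smalloD_tendsto[OF o] unfolding f_def .
    then have lim0: "((\<lambda>n. real n * f n) \<longlongrightarrow> 0) sequentially" by (simp add: mult.commute)
    have "filterlim E at_top sequentially"
      unfolding filterlim_at_top
    proof
      fix Z :: real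
      have "\<forall>\<^sub>F n in sequentially. real n * f n < c * exp (- Z)"
        using lim0 cpos by (intro order_tendstoD(2)) auto
      with good show "\<forall>\<^sub>F n in sequentially. Z \<le> E n"
      proof eventually_elim
        case (elim n)
        then have "c * exp (- E n) < c * exp (- Z)" by linarith
        then have "exp (- E n) < exp (- Z)" using cpos by simp
        then show ?case by simp
      qed
    qed
    then show "filterlim (\<lambda>n. (a n + b n - 2 * sqrt (a n * b n) - 1) * ln (real n)
                              + ln (ln (real n)) / 2) at_top sequentially"
      unfolding E_def .
  next
    assume "filterlim (\<lambda>n. (a n + b n - 2 * sqrt (a n * b n) - 1) * ln (real n)
                              + ln (ln (real n)) / 2) at_top sequentially"
    then have lim: "filterlim E at_top sequentially" unfolding E_def .
    have ev0: "\<forall>\<^sub>F n in sequentially. E n \<ge> 0" using lim by (simp add: filterlim_at_top)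
    have expE: "((\<lambda>n. exp (- E n)) \<longlongrightarrow> 0) sequentially"
    proof -
      have "filterlim (\<lambda>n. - E n) at_bot sequentially"
        using lim by (simp add: filterlim_uminus_at_top)
      then show ?thesis by (rule filterlim_compose[OF exp_at_bot])
    qed
    have upper: "\<forall>\<^sub>F n in sequentially. real n * f n \<le> K * exp (- E n)"
      using good ev0 ev_L
    proof eventually_elim
      case (elim n)
      define L where "L = ln (real n)"
      define D where "D = a n + b n - 2 * sqrt (a n * b n)"
      have L0: "L > 0" using elim by (simp add: L_def)
      have E0: "(D - 1) * L + ln L / 2 \<ge> 0" using elim by (simp add: E_def D_def L_def)
      have "ln L < L" using L0 by simp
      have "D \<ge> 1/2"
      proof (rule ccontr)
        assume "\<not> D \<ge> 1/2"
        then have "D - 1 < - 1/2" by simp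
        then have "(D - 1) * L < (-1/2) * L" using L0 by (intro mult_strict_right_mono) auto
        with E0 \<open>ln L < L\<close> show False by linarith
      qed
      then show ?case using elim by (simp add: D_def)
    qed
    have lower: "\<forall>\<^sub>F n in sequentially. 0 \<le> real n * f n"
      using good by eventually_elim (use cpos in \<open>smt (verit) exp_gt_zero mult_pos_pos\<close>)
    have "((\<lambda>n. K * exp (- E n)) \<longlongrightarrow> K * 0) sequentially"
      by (intro tendsto_mult tendsto_const expE)
    then have "((\<lambda>n. real n * f n) \<longlongrightarrow> 0) sequentially"
      using tendsto_sandwich[OF lower upper tendsto_const] by simp
    then have "((\<lambda>n. f n / (1 / real n)) \<longlongrightarrow> 0) sequentially" by (simp add: mult.commute)
    then have "f \<in> o(\<lambda>n. 1 / real n)"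
      by (rule smalloI_tendsto) (use ev_n in \<open>eventually_elim, simp\<close>)
    then show "(\<lambda>n. Pnpq n (a n * ln (real n) / real n) (b n * ln (real n) / real n)) \<in> o(\<lambda>n. 1 / real n)"
      unfolding f_def .
  qed
qed


end
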